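(* Let $X$ be a finite set with a transitive action of a finite group $G$, let $\pi$ be the induced permutation representation of $G$ on $\mathcal H_X$, and let $\mathcal T$ be the commutant of $\pi(G)$. If $T\in\mathcal T$, then for any $x_0\in X$, \[\|T\|_m=\|S_T|_{\mathcal T}\|=|X|^{-1}\operatorname{Tr}(|T|)=\langle|T|e_{x_0},e_{x_0}\rangle.\]
   Context: $\mathcal H_X$ is the Hilbert space with orthonormal basis $\{e_x:x\in X\}$, and $\pi(g)e_x=e_{gx}$. For a matrix $T=[t_{xy}]$, $S_T$ is the Schur multiplier $R=[r_{xy}]\mapsto[t_{xy}r_{xy}]$ on $\mathcal B(\mathcal H_X)$, $\|T\|_m$ is its norm, and $\|S_T|_{\mathcal T}\|$ is the norm of its restriction to $\mathcal T$ (with the operator norm). $|T|=(T^*T)^{1/2}$. *)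

theory Defs
  imports "HOL-Analysis.Analysis" "HOL-Algebra.Group_Action"
begin

text \<open>Matrices on H_X, X a finite type 'x, are elements of complex^'x^'x
  (row index first); vectors complex^'x carry the Euclidean (l2) norm.\<close>

definition opnorm :: "complex^'x::finite^'x \<Rightarrow> real" where
  "opnorm A = onorm (\<lambda>v. A *v v)"

definition cadj :: "complex^'x::finite^'x \<Rightarrow> complex^'x^'x" where
  "cadj A = (\<chi> i j. cnj (A $ j $ i))"

definition cinner :: "complex^'x::finite \<Rightarrow> complex^'x \<Rightarrow> complex" where
  "cinner v w = (\<Sum>i\<in>UNIV. v $ i * cnj (w $ i))"

definition psd :: "complex^'x::finite^'x \<Rightarrow> bool" where
  "psd A \<longleftrightarrow> cadj A = A \<and> (\<forall>v. Im (cinner (A *v v) v) = 0 \<and> 0 \<le> Re (cinner (A *v v) v))"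

definition mabs :: "complex^'x::finite^'x \<Rightarrow> complex^'x^'x" where
  "mabs T = (THE P. psd P \<and> P ** P = cadj T ** T)"

definition mtrace :: "complex^'x::finite^'x \<Rightarrow> complex" where
  "mtrace A = (\<Sum>i\<in>UNIV. A $ i $ i)"

definition basis_vec :: "'x::finite \<Rightarrow> complex^'x" where
  "basis_vec x = (\<chi> y. if y = x then 1 else 0)"

definition schur :: "complex^'x::finite^'x \<Rightarrow> complex^'x^'x \<Rightarrow> complex^'x^'x" where
  "schur T R = (\<chi> i j. T $ i $ j * R $ i $ j)"

definition multiplier_norm :: "complex^'x::finite^'x \<Rightarrow> real" where
  "multiplier_norm T = (SUP R\<in>{R. opnorm R \<le> 1}. opnorm (schur T R))"

definition restricted_multiplier_norm ::
  "complex^'x::finite^'x \<Rightarrow> (complex^'x^'x) set \<Rightarrow> real" where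
  "restricted_multiplier_norm T \<T> = (SUP R\<in>{R\<in>\<T>. opnorm R \<le> 1}. opnorm (schur T R))"

definition perm_rep :: "('g \<Rightarrow> 'x \<Rightarrow> 'x) \<Rightarrow> 'g \<Rightarrow> complex^'x::finite^'x" where
  "perm_rep \<phi> g = (\<chi> i j. if i = \<phi> g j then 1 else 0)"

definition commutant :: "(complex^'x::finite^'x) set \<Rightarrow> (complex^'x^'x) set" where
  "commutant S = {T. \<forall>A\<in>S. T ** A = A ** T}"

end

theory Submission
  imports Defs
begin



section \<open>Sesquilinear form\<close>

lemma cinner_add_left: "cinner (u + v) w = cinner u w + cinner v w"
  by (simp add: cinner_def algebra_simps sum.distrib)
lemma cinner_add_right: "cinner u (v + w) = cinner u v + cinner u w"
  by (simp add: cinner_def algebra_simps sum.distrib)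
lemma cinner_diff_left: "cinner (u - v) w = cinner u w - cinner v w"
  by (simp add: cinner_def algebra_simps sum_subtractf)
lemma cinner_diff_right: "cinner u (v - w) = cinner u v - cinner u w"
  by (simp add: cinner_def algebra_simps sum_subtractf)
lemma cinner_scale_left: "cinner (c *s v) w = c * cinner v w"
  by (simp add: cinner_def sum_distrib_left mult.assoc)
lemma cinner_scale_right: "cinner v (c *s w) = cnj c * cinner v w"
  by (simp add: cinner_def sum_distrib_left mult_ac)
lemma cinner_zero_left[simp]: "cinner 0 w = 0"
  by (simp add: cinner_def)
lemma cinner_zero_right[simp]: "cinner w 0 = 0"
  by (simp add: cinner_def)
lemma cinner_sum_left: "cinner (sum f S) w = (\<Sum>x\<in>S. cinner (f x) w)"
  unfolding cinner_def by (simp add: sum_distrib_right) (rule sum.swap)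
lemma cinner_sum_right: "cinner w (sum f S) = (\<Sum>x\<in>S. cinner w (f x))"
  unfolding cinner_def by (simp add: sum_distrib_left) (rule sum.swap)
lemma cinner_commute: "cinner w v = cnj (cinner v w)"
  by (simp add: cinner_def mult.commute)

lemma norm_vec_sq: "(norm (v::complex^'n))^2 = (\<Sum>i\<in>UNIV. (cmod (v$i))^2)"
  unfolding norm_vec_def L2_set_def by (simp add: sum_nonneg)

lemma cinner_self: "cinner v v = of_real ((norm v)^2)"
  unfolding norm_vec_sq cinner_def of_real_sum by (rule sum.cong) (simp_all add: complex_mult_cnj cmod_power2)

lemma Re_cinner: "Re (cinner v w) = inner v w"
  by (simp add: cinner_def inner_vec_def inner_complex_def)

lemma cinner_self_Re: "Re (cinner v v) = (norm v)^2"
  by (simp add: cinner_self)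

lemma cinner_self_eq_0: "cinner v v = 0 \<longleftrightarrow> v = 0"
  by (simp add: cinner_self)

lemma norm_scale: "norm (c *s (v::complex^'n)) = cmod c * norm v"
proof -
  have "(norm (c *s v))^2 = (cmod c * norm v)^2"
    unfolding norm_vec_sq power_mult_distrib by (simp add: norm_mult power_mult_distrib sum_distrib_left)
  then show ?thesis by (simp add: power2_eq_iff_nonneg)
qed

lemma norm_cinner: "cmod (cinner v w) \<le> norm v * norm w"
proof (cases "cinner v w = 0")
  case True then show ?thesis by simp
next
  case False
  define c where "c = cinner v w"
  define u where "u = (cnj c / of_real (cmod c)) *s v"
  have cu: "cmod (cnj c / of_real (cmod c)) = 1" using False c_def by (simp add: norm_divide)
  have "cinner u w = cnj c / of_real (cmod c) * c" by (simp add: u_def cinner_scale_left c_def)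
  also have "\<dots> = of_real (cmod c)"
    using False c_def by (simp add: field_simps complex_norm_square[symmetric] power2_eq_square)
  finally have "cmod c = inner u w" by (metis Re_cinner Re_complex_of_real)
  also have "\<dots> \<le> norm u * norm w" by (rule norm_cauchy_schwarz)
  also have "norm u = norm v" by (simp add: u_def norm_scale cu)
  finally show ?thesis by (simp add: c_def)
qed




lemma mv_add: "(A + B) *v v = A *v v + B *v (v::complex^'n)"
  by (simp add: matrix_vector_mult_def vec_eq_iff algebra_simps sum.distrib)
lemma mv_diff: "(A - B) *v v = A *v v - B *v (v::complex^'n)"
  by (simp add: matrix_vector_mult_def vec_eq_iff algebra_simps sum_subtractf)
lemma mv_add_right: "A *v (u + v) = A *v u + A *v (v::complex^'n)"
  by (simp add: matrix_vector_mult_def vec_eq_iff algebra_simps sum.distrib)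
lemma mv_diff_right: "A *v (u - v) = A *v u - A *v (v::complex^'n)"
  by (simp add: matrix_vector_mult_def vec_eq_iff algebra_simps sum_subtractf)
lemma mv_scale: "A *v (c *s v) = c *s (A *v (v::complex^'n))"
  by (simp add: matrix_vector_mult_def vec_eq_iff sum_distrib_left mult_ac)
lemma mv_zero[simp]: "A *v 0 = (0::complex^'n)"
  by (simp add: matrix_vector_mult_def vec_eq_iff)
lemma mv_sum: "A *v (sum f S) = (\<Sum>x\<in>S. A *v f x :: complex^'n)"
  by (cases "finite S", induct S rule: finite_induct) (simp_all add: mv_add_right)
lemma mv_mat: "mat c *v v = c *s (v::complex^'n)"
  by (simp add: matrix_vector_mult_def vec_eq_iff mat_def if_distrib if_distribR cong: if_cong)

lemma cadj_cadj[simp]: "cadj (cadj A) = A"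
  by (simp add: cadj_def vec_eq_iff)
lemma cadj_mult: "cadj (A ** B) = cadj B ** cadj A"
  by (simp add: cadj_def vec_eq_iff matrix_matrix_mult_def mult.commute)
lemma cadj_mat: "cadj (mat c) = mat (cnj c)"
  by (simp add: cadj_def vec_eq_iff mat_def)
lemma cadj_add: "cadj (A + B) = cadj A + cadj B"
  by (simp add: cadj_def vec_eq_iff)
lemma cadj_diff: "cadj (A - B) = cadj A - cadj B"
  by (simp add: cadj_def vec_eq_iff)

lemma cinner_adj: "cinner (A *v v) w = cinner v (cadj A *v w)"
  unfolding cinner_def matrix_vector_mult_def cadj_def
  by (simp add: sum_distrib_left sum_distrib_right mult_ac) (rule sum.swap)

lemma cinner_adj': "cinner v (A *v w) = cinner (cadj A *v v) w"
  by (simp add: cinner_adj)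

lemma mtrace_trace: "mtrace A = trace A"
  by (simp add: mtrace_def trace_def)

lemma mat_eqI: "(\<And>v. A *v v = B *v (v::complex^'n)) \<Longrightarrow> A = B"
  by (subst matrix_eq) simp

lemma mv_basis: "A *v basis_vec j = (\<chi> i. A $ i $ j)"
  unfolding matrix_vector_mult_def basis_vec_def by (simp add: vec_eq_iff if_distrib if_distribR cong: if_cong)

lemma cinner_basis: "cinner (A *v basis_vec j) (basis_vec i) = A $ i $ j"
  unfolding mv_basis by (simp add: cinner_def basis_vec_def if_distrib if_distribR cong: if_cong)




lemma herm_cinner_swap: "cadj A = A \<Longrightarrow> cinner (A *v w) v = cinner w (A *v v)"
  by (metis cinner_adj)

lemma herm_real: "cadj A = A \<Longrightarrow> Im (cinner (A *v v) v) = 0"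
proof -
  assume h: "cadj A = A"
  have "cinner (A *v v) v = cnj (cinner (A *v v) v)"
    using herm_cinner_swap[OF h, of v v] cinner_commute[of v "A *v v"] by simp
  then have "Im (cinner (A *v v) v) = Im (cnj (cinner (A *v v) v))" by simp
  then show ?thesis by simp
qed

lemma herm_of_real: "cadj A = A \<Longrightarrow> cinner (A *v v) v = of_real (Re (cinner (A *v v) v))"
  using herm_real complex_eq_iff by (metis Im_complex_of_real Re_complex_of_real)

lemma cont_cinner_quad: "continuous_on UNIV (\<lambda>z::complex^'n. Re (cinner (A *v z) z))"
  unfolding cinner_def matrix_vector_mult_def
  by (intro continuous_intros)

lemma cont_cinner_lin: "continuous_on UNIV (\<lambda>z::complex^'n. cinner z b)"
  unfolding cinner_def
  by (intro continuous_intros)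

lemma psd_on_zero:
  fixes M :: "complex^'n^'n"
  assumes h: "cadj M = M"
    and Sadd: "\<And>x y. x\<in>S \<Longrightarrow> y\<in>S \<Longrightarrow> x + y \<in> S"
    and Sscale: "\<And>c x. x\<in>S \<Longrightarrow> c *s x \<in> S"
    and pos: "\<forall>z\<in>S. 0 \<le> Re (cinner (M *v z) z)"
    and v: "v \<in> S" and v0: "Re (cinner (M *v v) v) = 0" and w: "w \<in> S"
  shows "cinner (M *v v) w = 0"
proof -
  define c where "c = cinner (M *v v) w"
  define \<beta> where "\<beta> = Re (cinner (M *v w) w)"
  have \<beta>0: "\<beta> \<ge> 0" using pos w \<beta>_def by auto
  define r :: real where "r = 1 / (\<beta> + 1)"
  have r0: "r > 0" using \<beta>0 r_def by simp
  have "r * \<beta> = \<beta> / (\<beta> + 1)" by (simp add: r_def)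
  also have "\<dots> < 1" using \<beta>0 by (subst pos_divide_less_eq) auto
  finally have r1: "r * \<beta> < 1" .
  define s where "s = - (of_real r * c)"
  define z where "z = v + s *s w"
  have zS: "z \<in> S" using Sadd Sscale v w z_def by auto
  have hc: "cinner (M *v w) v = cnj c"
    using herm_cinner_swap[OF h, of w v] cinner_commute c_def by metis
  have e: "cinner (M *v z) z = cinner (M *v v) v + cnj s * c + s * cnj c + s * cnj s * cinner (M *v w) w"
    by (simp add: z_def mv_add_right mv_scale cinner_add_left cinner_add_right cinner_scale_left
        cinner_scale_right hc c_def algebra_simps)
  have cm: "cmod c * cmod c = Re c * Re c + Im c * Im c" by (metis cmod_power2 power2_eq_square)
  have "Re (cinner (M *v z) z) = Re (cinner (M *v v) v) - 2 * r * (cmod c)^2 + r^2 * (cmod c)^2 * \<beta>"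
    unfolding e s_def \<beta>_def
    using cm by (simp add: algebra_simps power2_eq_square)
  then have "0 \<le> - 2 * r * (cmod c)^2 + r^2 * (cmod c)^2 * \<beta>"
    using pos zS v0 by auto
  then have "0 \<le> r * (cmod c)^2 * (r * \<beta> - 2)" by (simp add: algebra_simps power2_eq_square)
  moreover have "r * \<beta> - 2 < 0" using r1 by simp
  ultimately have "r * (cmod c)^2 \<le> 0" by (smt (verit) mult_pos_neg)
  then have "(cmod c)^2 \<le> 0" using r0 by (simp add: mult_le_0_iff)
  then show ?thesis unfolding c_def by simp
qed




lemma quad_scale: "cinner (A *v (c *s z)) (c *s z) = (c * cnj c) * cinner (A *v z) z"
  by (simp add: mv_scale cinner_scale_left cinner_scale_right)

lemma eigvec_exists:
  fixes A :: "complex^'n^'n"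
  assumes h: "cadj A = A"
    and Sadd: "\<And>x y. x\<in>S \<Longrightarrow> y\<in>S \<Longrightarrow> x + y \<in> S"
    and Sscale: "\<And>c x. x\<in>S \<Longrightarrow> c *s x \<in> S"
    and cl: "closed S" and inv: "\<And>x. x\<in>S \<Longrightarrow> A *v x \<in> S"
    and w: "w \<in> S" and w0: "w \<noteq> 0"
  shows "\<exists>e\<in>S. norm e = 1 \<and> A *v e = of_real (Re (cinner (A *v e) e)) *s e"
proof -
  define q where "q z = Re (cinner (A *v z) z)" for z
  define K where "K = S \<inter> sphere 0 1"
  have cK: "compact K" unfolding K_def using cl by (intro closed_Int_compact compact_sphere)
  have nw: "norm w > 0" using w0 by simp
  have "norm (of_real (1 / norm w) *s w) = 1" using nw by (simp add: norm_scale norm_divide)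
  then have "of_real (1 / norm w) *s w \<in> K" unfolding K_def using Sscale w by simp
  then have Kne: "K \<noteq> {}" by auto
  have cq: "continuous_on K q" unfolding q_def
    using cont_cinner_quad continuous_on_subset by blast
  obtain v where vK: "v \<in> K" and vmax: "\<And>z. z \<in> K \<Longrightarrow> q z \<le> q v"
    using continuous_attains_sup[OF cK Kne cq] by blast
  define lam where "lam = q v"
  have vS: "v \<in> S" and nv: "norm v = 1" using vK K_def by auto
  have bound: "q z \<le> lam * (norm z)^2" if zS: "z \<in> S" for z
  proof (cases "z = 0")
    case True then show ?thesis by (simp add: q_def)
  next
    case False
    then have nz: "norm z > 0" by simp
    define z' where "z' = of_real (1 / norm z) *s z"
    have "z' \<in> K" unfolding K_def z'_def using Sscale zS nz by (simp add: norm_scale norm_divide)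
    then have "q z' \<le> lam" using vmax lam_def by simp
    moreover have "q z' = q z / (norm z)^2"
      unfolding q_def z'_def quad_scale by (simp add: power2_eq_square)
    ultimately show ?thesis using nz by (simp add: divide_le_eq)
  qed
  define M where "M = mat (of_real lam) - A"
  have hM: "cadj M = M" unfolding M_def by (simp add: cadj_diff cadj_mat h)
  have Mq: "Re (cinner (M *v z) z) = lam * (norm z)^2 - q z" for z
    unfolding M_def q_def by (simp add: mv_diff mv_mat cinner_diff_left cinner_scale_left cinner_self)
  have pos: "\<forall>z\<in>S. 0 \<le> Re (cinner (M *v z) z)" using bound Mq by simp
  have v0: "Re (cinner (M *v v) v) = 0" using Mq nv lam_def by simp
  have Mv: "M *v v = of_real lam *s v + (-1) *s (A *v v)"
    unfolding M_def by (simp add: mv_diff mv_mat vec_eq_iff)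
  have MvS: "M *v v \<in> S" unfolding Mv using Sadd Sscale inv vS by blast
  have "cinner (M *v v) (M *v v) = 0"
    by (rule psd_on_zero[OF hM Sadd Sscale pos vS v0 MvS]) (auto simp: Sadd Sscale)
  then have "M *v v = 0" by (simp add: cinner_self_eq_0)
  then have "A *v v = of_real lam *s v" unfolding M_def by (simp add: mv_diff mv_mat)
  then show ?thesis using vS nv lam_def q_def by auto
qed

definition eigON :: "complex^'n::finite^'n \<Rightarrow> (complex^'n) set \<Rightarrow> bool" where
  "eigON A B \<longleftrightarrow> (\<forall>b\<in>B. norm b = 1 \<and> A *v b = of_real (Re (cinner (A *v b) b)) *s b)
     \<and> (\<forall>b\<in>B. \<forall>c\<in>B. b \<noteq> c \<longrightarrow> cinner b c = 0)"

lemma eigON_bound: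
  fixes A :: "complex^'n::finite^'n"
  assumes "eigON A B" shows "finite B \<and> card B \<le> DIM(complex^'n)"
proof -
  have "pairwise orthogonal B"
    using assms unfolding eigON_def pairwise_def orthogonal_def
    by (metis Re_cinner zero_complex.simps(1))
  moreover have "0 \<notin> B" using assms unfolding eigON_def by force
  ultimately have "independent B" by (rule pairwise_orthogonal_independent)
  then show ?thesis by (rule independent_bound)
qed

lemma eigON_inner: "eigON A B \<Longrightarrow> b \<in> B \<Longrightarrow> c \<in> B \<Longrightarrow> cinner b c = (if b = c then 1 else 0)"
  unfolding eigON_def by (auto simp: cinner_self)

lemma spectral:
  fixes A :: "complex^'n^'n"
  assumes h: "cadj A = A"
  obtains B where "eigON A B" "finite B" "\<And>v. v = (\<Sum>b\<in>B. cinner v b *s b)"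
proof -
  have "\<exists>B. eigON A B \<and> (\<forall>B'. eigON A B' \<longrightarrow> card B' \<le> card B)"
    by (rule ex_has_greatest_nat[where k="{}" and b="Suc DIM(complex^'n)"])
       (simp add: eigON_def, metis eigON_bound less_Suc_eq_le)
  then obtain B where B: "eigON A B" and Bmax: "\<And>B'. eigON A B' \<Longrightarrow> card B' \<le> card B" by blast
  have fin: "finite B" using eigON_bound[OF B] by simp
  have span: "v = (\<Sum>b\<in>B. cinner v b *s b)" for v
  proof (rule ccontr)
    assume ne: "v \<noteq> (\<Sum>b\<in>B. cinner v b *s b)"
    define w where "w = v - (\<Sum>b\<in>B. cinner v b *s b)"
    have w0: "w \<noteq> 0" using ne w_def by simp
    have wperp: "cinner w c = 0" if cB: "c \<in> B" for c
    proof -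
      have "(\<Sum>b\<in>B. cinner (cinner v b *s b) c) = (\<Sum>b\<in>B. if b = c then cinner v c else 0)"
        by (rule sum.cong) (auto simp: cinner_scale_left eigON_inner[OF B _ cB])
      also have "\<dots> = cinner v c" using fin cB by simp
      finally show ?thesis unfolding w_def by (simp add: cinner_diff_left cinner_sum_left)
    qed
    define S where "S = {z. \<forall>b\<in>B. cinner z b = 0}"
    have Sadd: "x + y \<in> S" if "x \<in> S" "y \<in> S" for x y
      using that unfolding S_def by (simp add: cinner_add_left)
    have Sscale: "c *s x \<in> S" if "x \<in> S" for c x
      using that unfolding S_def by (simp add: cinner_scale_left)
    have cl: "closed S"
    proof -
      have "S = (\<Inter>b\<in>B. {z. cinner z b = 0})" unfolding S_def by auto
      moreover have "closed {z. cinner z b = 0}" for b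
        using cont_cinner_lin[of b] by (simp add: closed_Collect_eq continuous_on_const)
      ultimately show ?thesis by auto
    qed
    have inv: "A *v x \<in> S" if "x \<in> S" for x
    proof -
      have "cinner (A *v x) b = 0" if bB: "b \<in> B" for b
      proof -
        have "cinner (A *v x) b = cinner x (A *v b)" by (rule herm_cinner_swap[OF h])
        also have "A *v b = of_real (Re (cinner (A *v b) b)) *s b" using B bB unfolding eigON_def by blast
        finally show ?thesis using \<open>x \<in> S\<close> bB unfolding S_def by (simp add: cinner_scale_right)
      qed
      then show ?thesis unfolding S_def by simp
    qed
    have wS: "w \<in> S" unfolding S_def using wperp by simp
    obtain e where eS: "e \<in> S" and ne1: "norm e = 1" and ee: "A *v e = of_real (Re (cinner (A *v e) e)) *s e"
      using eigvec_exists[OF h Sadd Sscale cl inv wS w0] by blast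
    have eB: "e \<notin> B"
    proof
      assume "e \<in> B"
      then have "cinner e e = 0" using eS unfolding S_def by blast
      then show False using ne1 by (simp add: cinner_self_eq_0)
    qed
    have eb: "cinner e x = 0" if "x \<in> B" for x using eS that S_def by blast
    have be: "cinner x e = 0" if "x \<in> B" for x using eb[OF that] cinner_commute by (metis complex_cnj_zero)
    have "\<forall>b\<in>insert e B. norm b = 1 \<and> A *v b = of_real (Re (cinner (A *v b) b)) *s b"
      using B ne1 ee unfolding eigON_def by auto
    moreover have "\<forall>b\<in>insert e B. \<forall>c\<in>insert e B. b \<noteq> c \<longrightarrow> cinner b c = 0"
      using B eb be unfolding eigON_def by auto
    ultimately have "eigON A (insert e B)" unfolding eigON_def by blast
    then have "card (insert e B) \<le> card B" by (rule Bmax)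
    then show False using fin eB by simp
  qed
  show ?thesis using B fin span that by blast
qed




lemma smult_assoc: "c *s (d *s x) = (c * d) *s (x::complex^'n)"
  by (simp add: vec_eq_iff mult.assoc)
lemma smult_sum: "c *s sum f S = (\<Sum>x\<in>S. c *s f x :: complex^'n)"
  by (simp add: vec_eq_iff sum_distrib_left)
lemma smult_one: "1 *s x = (x::complex^'n)"
  by (simp add: vec_eq_iff)
lemma smult_zero: "0 *s x = (0::complex^'n)"
  by (simp add: vec_eq_iff)

definition evl :: "complex^'n^'n \<Rightarrow> complex^'n \<Rightarrow> real" where
  "evl A b = Re (cinner (A *v b) b)"

definition fc :: "complex^'n^'n \<Rightarrow> (complex^'n) set \<Rightarrow> (real \<Rightarrow> real) \<Rightarrow> complex^'n^'n" where
  "fc A B f = (\<chi> i j. \<Sum>b\<in>B. of_real (f (evl A b)) * b$i * cnj (b$j))"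

locale eigb =
  fixes A :: "complex^'n::finite^'n" and B :: "(complex^'n) set"
  assumes herm: "cadj A = A" and on: "eigON A B" and fin: "finite B"
    and span: "\<And>v. v = (\<Sum>b\<in>B. cinner v b *s b)"
begin

lemma inner_B: "b \<in> B \<Longrightarrow> c \<in> B \<Longrightarrow> cinner b c = (if b = c then 1 else 0)"
  using eigON_inner[OF on] .

lemma eig_B: "b \<in> B \<Longrightarrow> A *v b = of_real (evl A b) *s b"
  using on unfolding eigON_def evl_def by blast

lemma fc_mv: "fc A B f *v v = (\<Sum>b\<in>B. (of_real (f (evl A b)) * cinner v b) *s b)"
  unfolding fc_def matrix_vector_mult_def cinner_def
  apply (simp add: vec_eq_iff sum_distrib_right)
  apply (subst sum.swap)
  apply (simp add: sum_distrib_left mult_ac)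
  done

lemma fc_eig: "b \<in> B \<Longrightarrow> fc A B f *v b = of_real (f (evl A b)) *s b"
proof -
  assume bB: "b \<in> B"
  have "fc A B f *v b = (\<Sum>c\<in>B. if c = b then of_real (f (evl A b)) *s b else 0)"
    unfolding fc_mv by (rule sum.cong) (auto simp: inner_B[OF bB] smult_zero)
  also have "\<dots> = of_real (f (evl A b)) *s b" using fin bB by simp
  finally show ?thesis .
qed

lemma fc_lin: "fc A B f *v (\<Sum>b\<in>B. c b *s b) = (\<Sum>b\<in>B. (of_real (f (evl A b)) * c b) *s b)"
  by (simp add: mv_sum mv_scale fc_eig smult_assoc mult.commute)

lemma fc_mult: "fc A B f ** fc A B g = fc A B (\<lambda>x. f x * g x)"
proof (rule mat_eqI)
  fix v
  have "(fc A B f ** fc A B g) *v v = fc A B f *v (fc A B g *v v)"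
    by (simp add: matrix_vector_mul_assoc)
  also have "\<dots> = (\<Sum>b\<in>B. (of_real (f (evl A b)) * (of_real (g (evl A b)) * cinner v b)) *s b)"
    unfolding fc_mv[of g] fc_lin ..
  also have "\<dots> = fc A B (\<lambda>x. f x * g x) *v v"
    unfolding fc_mv by (simp add: mult.assoc)
  finally show "(fc A B f ** fc A B g) *v v = fc A B (\<lambda>x. f x * g x) *v v" .
qed

lemma fc_id: "fc A B (\<lambda>x. x) = A"
proof (rule mat_eqI)
  fix v
  have "A *v v = A *v (\<Sum>b\<in>B. cinner v b *s b)" using span by metis
  also have "\<dots> = (\<Sum>b\<in>B. (of_real (evl A b) * cinner v b) *s b)"
    by (simp add: mv_sum mv_scale eig_B smult_assoc mult.commute)
  also have "\<dots> = fc A B (\<lambda>x. x) *v v" unfolding fc_mv ..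
  finally show "fc A B (\<lambda>x. x) *v v = A *v v" by simp
qed

lemma fc_one: "fc A B (\<lambda>x. 1) = mat 1"
proof (rule mat_eqI)
  fix v
  show "fc A B (\<lambda>x. 1) *v v = mat 1 *v v"
    unfolding fc_mv using span[of v] by simp
qed

lemma fc_cong: "(\<And>b. b \<in> B \<Longrightarrow> f (evl A b) = g (evl A b)) \<Longrightarrow> fc A B f = fc A B g"
  unfolding fc_def by (simp add: vec_eq_iff)

lemma fc_adj: "cadj (fc A B f) = fc A B f"
  unfolding fc_def cadj_def by (simp add: vec_eq_iff mult_ac)

lemma fc_quad: "cinner (fc A B f *v v) v = (\<Sum>b\<in>B. of_real (f (evl A b) * (cmod (cinner v b))^2))"
proof -
  have "cinner (fc A B f *v v) v = (\<Sum>b\<in>B. of_real (f (evl A b)) * cinner v b * cinner b v)"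
    unfolding fc_mv cinner_sum_left by (simp add: cinner_scale_left)
  also have "\<dots> = (\<Sum>b\<in>B. of_real (f (evl A b) * (cmod (cinner v b))^2))"
  proof (rule sum.cong)
    fix b
    have "cinner v b * cinner b v = of_real ((cmod (cinner v b))^2)"
      using complex_norm_square[of "cinner v b"] cinner_commute[of b v] by simp
    then show "of_real (f (evl A b)) * cinner v b * cinner b v = of_real (f (evl A b) * (cmod (cinner v b))^2)"
      by (simp add: mult.assoc)
  qed simp
  finally show ?thesis .
qed

lemma fc_trace: "mtrace (fc A B f) = (\<Sum>b\<in>B. of_real (f (evl A b)))"
proof -
  have "mtrace (fc A B f) = (\<Sum>b\<in>B. of_real (f (evl A b)) * cinner b b)"
    unfolding mtrace_def fc_def cinner_def
    apply (simp add: sum_distrib_left)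
    apply (subst sum.swap)
    apply (simp add: mult_ac)
    done
  also have "\<dots> = (\<Sum>b\<in>B. of_real (f (evl A b)))"
    by (rule sum.cong) (auto simp: inner_B)
  finally show ?thesis .
qed

lemma eig_perp:
  assumes u: "A *v u = of_real \<mu> *s u" and bB: "b \<in> B" and ne: "evl A b \<noteq> \<mu>"
  shows "cinner u b = 0"
proof -
  have "of_real \<mu> * cinner u b = cinner (A *v u) b" by (simp add: u cinner_scale_left)
  also have "\<dots> = cinner u (A *v b)" by (rule herm_cinner_swap[OF herm])
  also have "\<dots> = of_real (evl A b) * cinner u b" by (simp add: eig_B[OF bB] cinner_scale_right)
  finally have "(of_real \<mu> - of_real (evl A b)) * cinner u b = 0" by (simp add: algebra_simps)
  then show ?thesis using ne by simp
qed

lemma fc_on_eig: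
  assumes u: "A *v u = of_real \<mu> *s u"
  shows "fc A B f *v u = of_real (f \<mu>) *s u"
proof -
  have "fc A B f *v u = (\<Sum>b\<in>B. (of_real (f (evl A b)) * cinner u b) *s b)" by (rule fc_mv)
  also have "\<dots> = (\<Sum>b\<in>B. of_real (f \<mu>) *s (cinner u b *s b))"
  proof (rule sum.cong)
    fix b assume bB: "b \<in> B"
    show "(of_real (f (evl A b)) * cinner u b) *s b = of_real (f \<mu>) *s (cinner u b *s b)"
    proof (cases "evl A b = \<mu>")
      case True then show ?thesis by (simp add: smult_assoc)
    next
      case False then show ?thesis using eig_perp[OF u bB] by (simp add: smult_zero smult_assoc)
    qed
  qed simp
  also have "\<dots> = of_real (f \<mu>) *s (\<Sum>b\<in>B. cinner u b *s b)" by (simp only: smult_sum)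
  also have "\<dots> = of_real (f \<mu>) *s u" by (simp only: span[of u, symmetric])
  finally show ?thesis .
qed

lemma fc_commute:
  assumes MA: "M ** A = A ** M"
  shows "M ** fc A B f = fc A B f ** M"
proof (rule mat_eqI)
  fix v
  have Mb: "fc A B f *v (M *v b) = of_real (f (evl A b)) *s (M *v b)" if bB: "b \<in> B" for b
  proof (rule fc_on_eig)
    have "A *v (M *v b) = M *v (A *v b)" by (simp add: matrix_vector_mul_assoc MA)
    also have "\<dots> = of_real (evl A b) *s (M *v b)" by (simp add: eig_B[OF bB] mv_scale)
    finally show "A *v (M *v b) = of_real (evl A b) *s (M *v b)" .
  qed
  have "(M ** fc A B f) *v v = M *v (fc A B f *v v)" by (simp add: matrix_vector_mul_assoc)
  also have "\<dots> = (\<Sum>b\<in>B. (of_real (f (evl A b)) * cinner v b) *s (M *v b))"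
    unfolding fc_mv by (simp add: mv_sum mv_scale)
  also have "\<dots> = (\<Sum>b\<in>B. cinner v b *s (fc A B f *v (M *v b)))"
    by (rule sum.cong) (simp_all add: Mb smult_assoc mult.commute)
  also have "\<dots> = fc A B f *v (M *v (\<Sum>b\<in>B. cinner v b *s b))"
    by (simp add: mv_sum mv_scale)
  also have "\<dots> = (fc A B f ** M) *v v" using span[of v] by (simp add: matrix_vector_mul_assoc)
  finally show "(M ** fc A B f) *v v = (fc A B f ** M) *v v" .
qed

end

lemma spectral_eigb:
  fixes A :: "complex^'n::finite^'n"
  assumes "cadj A = A" obtains B where "eigb A B"
  using spectral[OF assms] eigb.intro[OF assms] by metis




lemma bl_mv: "bounded_linear (\<lambda>v::complex^'n::finite. M *v v)"
  using matrix_vector_mul_linear linear_conv_bounded_linear by blast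

lemma opnorm_le: "norm (M *v v) \<le> opnorm M * norm (v::complex^'n::finite)"
  unfolding opnorm_def by (rule onorm[OF bl_mv])

lemma opnorm_nonneg: "0 \<le> opnorm (M::complex^'n::finite^'n)"
  unfolding opnorm_def by (rule onorm_pos_le[OF bl_mv])

lemma opnorm_bound: "0 \<le> b \<Longrightarrow> (\<And>v. norm (M *v v) \<le> b * norm v) \<Longrightarrow> opnorm (M::complex^'n::finite^'n) \<le> b"
  unfolding opnorm_def by (rule onorm_bound)

section \<open>Schur multiplier bound\<close>

lemma sum_swap3:
  "(\<Sum>x\<in>X. \<Sum>y\<in>Y. \<Sum>k\<in>K. F x y k) = (\<Sum>k\<in>K. \<Sum>x\<in>X. \<Sum>y\<in>Y. F x y k)"
proof -
  have "(\<Sum>x\<in>X. \<Sum>y\<in>Y. \<Sum>k\<in>K. F x y k) = (\<Sum>x\<in>X. \<Sum>k\<in>K. \<Sum>y\<in>Y. F x y k)"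
    by (rule sum.cong[OF refl]) (rule sum.swap)
  also have "\<dots> = (\<Sum>k\<in>K. \<Sum>x\<in>X. \<Sum>y\<in>Y. F x y k)" by (rule sum.swap)
  finally show ?thesis .
qed

lemma schur_bound:
  fixes A' B' R :: "complex^'n::finite^'n"
  assumes a0: "0 \<le> a"
    and rA: "\<And>x. (\<Sum>k\<in>UNIV. (cmod (A'$x$k))^2) \<le> a"
    and cB: "\<And>y. (\<Sum>k\<in>UNIV. (cmod (B'$k$y))^2) \<le> a"
  shows "opnorm (schur (A' ** B') R) \<le> a * opnorm R"
proof (rule opnorm_bound)
  show "0 \<le> a * opnorm R" by (simp add: a0 opnorm_nonneg)
  fix \<xi> :: "complex^'n"
  define S where "S = schur (A' ** B') R"
  define \<eta> where "\<eta> = S *v \<xi>"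
  define u where "u k = (\<chi> y. B'$k$y * \<xi>$y)" for k
  define w where "w k = (\<chi> x. cnj (A'$x$k) * \<eta>$x)" for k
  have k1: "cinner (S *v \<xi>) \<eta> = (\<Sum>x\<in>UNIV. \<Sum>y\<in>UNIV. \<Sum>k\<in>UNIV. A'$x$k * B'$k$y * R$x$y * \<xi>$y * cnj (\<eta>$x))"
    by (simp add: S_def schur_def cinner_def matrix_vector_mult_def matrix_matrix_mult_def
        sum_distrib_left sum_distrib_right mult_ac)
  have k2: "(\<Sum>k\<in>UNIV. cinner (R *v u k) (w k)) = (\<Sum>k\<in>UNIV. \<Sum>x\<in>UNIV. \<Sum>y\<in>UNIV. A'$x$k * B'$k$y * R$x$y * \<xi>$y * cnj (\<eta>$x))"
    by (simp add: u_def w_def cinner_def matrix_vector_mult_def sum_distrib_left sum_distrib_right mult_ac)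
  have key: "cinner (S *v \<xi>) \<eta> = (\<Sum>k\<in>UNIV. cinner (R *v u k) (w k))"
    unfolding k1 k2 by (rule sum_swap3)
  have nu: "(\<Sum>k\<in>UNIV. (norm (u k))^2) \<le> a * (norm \<xi>)^2"
  proof -
    have "(\<Sum>k\<in>UNIV. (norm (u k))^2) = (\<Sum>k\<in>UNIV. \<Sum>y\<in>UNIV. (cmod (B'$k$y))^2 * (cmod (\<xi>$y))^2)"
      by (simp add: norm_vec_sq u_def norm_mult power_mult_distrib)
    also have "\<dots> = (\<Sum>y\<in>UNIV. (\<Sum>k\<in>UNIV. (cmod (B'$k$y))^2) * (cmod (\<xi>$y))^2)"
      by (subst sum.swap) (simp add: sum_distrib_right)
    also have "\<dots> \<le> (\<Sum>y\<in>UNIV. a * (cmod (\<xi>$y))^2)"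
      by (rule sum_mono) (simp add: cB mult_right_mono)
    also have "\<dots> = a * (norm \<xi>)^2" by (simp add: norm_vec_sq sum_distrib_left)
    finally show ?thesis .
  qed
  have nw: "(\<Sum>k\<in>UNIV. (norm (w k))^2) \<le> a * (norm \<eta>)^2"
  proof -
    have "(\<Sum>k\<in>UNIV. (norm (w k))^2) = (\<Sum>k\<in>UNIV. \<Sum>x\<in>UNIV. (cmod (A'$x$k))^2 * (cmod (\<eta>$x))^2)"
      by (simp add: norm_vec_sq w_def norm_mult power_mult_distrib)
    also have "\<dots> = (\<Sum>x\<in>UNIV. (\<Sum>k\<in>UNIV. (cmod (A'$x$k))^2) * (cmod (\<eta>$x))^2)"
      by (subst sum.swap) (simp add: sum_distrib_right)
    also have "\<dots> \<le> (\<Sum>x\<in>UNIV. a * (cmod (\<eta>$x))^2)"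
      by (rule sum_mono) (simp add: rA mult_right_mono)
    also have "\<dots> = a * (norm \<eta>)^2" by (simp add: norm_vec_sq sum_distrib_left)
    finally show ?thesis .
  qed
  have L2u: "L2_set (\<lambda>k. norm (u k)) UNIV \<le> sqrt a * norm \<xi>"
  proof -
    have "L2_set (\<lambda>k. norm (u k)) UNIV = sqrt (\<Sum>k\<in>UNIV. (norm (u k))^2)" by (simp add: L2_set_def)
    also have "\<dots> \<le> sqrt (a * (norm \<xi>)^2)" using nu by (rule real_sqrt_le_mono)
    also have "\<dots> = sqrt a * norm \<xi>" by (simp add: real_sqrt_mult)
    finally show ?thesis .
  qed
  have L2w: "L2_set (\<lambda>k. norm (w k)) UNIV \<le> sqrt a * norm \<eta>"
  proof -
    have "L2_set (\<lambda>k. norm (w k)) UNIV = sqrt (\<Sum>k\<in>UNIV. (norm (w k))^2)" by (simp add: L2_set_def)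
    also have "\<dots> \<le> sqrt (a * (norm \<eta>)^2)" using nw by (rule real_sqrt_le_mono)
    also have "\<dots> = sqrt a * norm \<eta>" by (simp add: real_sqrt_mult)
    finally show ?thesis .
  qed
  have "(norm \<eta>)^2 = Re (cinner (S *v \<xi>) \<eta>)" by (simp add: \<eta>_def cinner_self_Re)
  also have "\<dots> \<le> cmod (cinner (S *v \<xi>) \<eta>)" by (rule complex_Re_le_cmod)
  also have "\<dots> \<le> (\<Sum>k\<in>UNIV. cmod (cinner (R *v u k) (w k)))" unfolding key by (rule norm_sum)
  also have "\<dots> \<le> (\<Sum>k\<in>UNIV. opnorm R * (norm (u k) * norm (w k)))"
  proof (rule sum_mono)
    fix k
    have "cmod (cinner (R *v u k) (w k)) \<le> norm (R *v u k) * norm (w k)" by (rule norm_cinner)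
    also have "\<dots> \<le> (opnorm R * norm (u k)) * norm (w k)" by (rule mult_right_mono[OF opnorm_le]) simp
    finally show "cmod (cinner (R *v u k) (w k)) \<le> opnorm R * (norm (u k) * norm (w k))" by (simp add: mult_ac)
  qed
  also have "\<dots> = opnorm R * (\<Sum>k\<in>UNIV. \<bar>norm (u k)\<bar> * \<bar>norm (w k)\<bar>)" by (simp add: sum_distrib_left)
  also have "\<dots> \<le> opnorm R * (L2_set (\<lambda>k. norm (u k)) UNIV * L2_set (\<lambda>k. norm (w k)) UNIV)"
    by (rule mult_left_mono[OF L2_set_mult_ineq opnorm_nonneg])
  also have "\<dots> \<le> opnorm R * ((sqrt a * norm \<xi>) * (sqrt a * norm \<eta>))"
    by (intro mult_left_mono mult_mono L2u L2w opnorm_nonneg) (auto simp: L2_set_def a0 sum_nonneg)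
  also have "\<dots> = (a * opnorm R * norm \<xi>) * norm \<eta>" using a0 by (simp add: mult_ac)
  finally have ineq: "(norm \<eta>)^2 \<le> (a * opnorm R * norm \<xi>) * norm \<eta>" .
  show "norm (S *v \<xi>) \<le> a * opnorm R * norm \<xi>"
  proof (cases "norm \<eta> = 0")
    case True then show ?thesis using a0 unfolding \<eta>_def by (simp add: opnorm_nonneg)
  next
    case False
    then have "norm \<eta> > 0" by simp
    then show ?thesis using ineq unfolding \<eta>_def by (simp add: power2_eq_square)
  qed
qed




section \<open>PSD square root uniqueness\<close>

lemma psd_herm: "psd P \<Longrightarrow> cadj P = P" by (simp add: psd_def)
lemma psd_pos: "psd P \<Longrightarrow> 0 \<le> Re (cinner (P *v v) v)" by (simp add: psd_def)

lemma psd_sqrt_unique: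
  fixes P Q :: "complex^'n::finite^'n"
  assumes P: "psd P" and Q: "psd Q" and PQ: "P ** P = Q ** Q"
  shows "P = Q"
proof -
  define D where "D = P - Q"
  have hP: "cadj P = P" and hQ: "cadj Q = Q" using psd_herm P Q by auto
  have hD: "cadj D = D" using hP hQ by (simp add: D_def cadj_diff)
  obtain BD where E: "eigb D BD" using spectral_eigb[OF hD] by blast
  have z: "evl D b = 0" if bB: "b \<in> BD" for b
  proof (rule ccontr)
    assume ne: "evl D b \<noteq> 0"
    define l where "l = evl D b"
    have nb: "norm b = 1" using eigb.on[OF E] bB unfolding eigON_def by blast
    have bb: "cinner b b = 1" using nb by (simp add: cinner_self)
    have Db: "D *v b = of_real l *s b" using eigb.eig_B[OF E bB] l_def by simp
    have Pb: "P *v b = Q *v b + of_real l *s b"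
      using Db unfolding D_def mv_diff by (simp add: algebra_simps)
    define a where "a = Re (cinner (P *v b) b)"
    define c where "c = Re (cinner (Q *v b) b)"
    have a0: "0 \<le> a" using psd_pos[OF P] a_def by simp
    have c0: "0 \<le> c" using psd_pos[OF Q] c_def by simp
    have ac: "a = c + l" unfolding a_def c_def Pb by (simp add: cinner_add_left cinner_scale_left bb)
    have nn: "cinner (P *v b) (P *v b) = cinner (Q *v b) (Q *v b)"
    proof -
      have "cinner (P *v b) (P *v b) = cinner ((P ** P) *v b) b"
        by (simp add: cinner_adj' hP matrix_vector_mul_assoc)
      also have "\<dots> = cinner ((Q ** Q) *v b) b" by (simp add: PQ)
      also have "\<dots> = cinner (Q *v b) (Q *v b)"
        by (simp add: cinner_adj' hQ matrix_vector_mul_assoc)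
      finally show ?thesis .
    qed
    have bQ: "Re (cinner b (Q *v b)) = c"
      unfolding c_def by (subst cinner_commute) simp
    have "Re (cinner (P *v b) (P *v b)) = Re (cinner (Q *v b) (Q *v b)) + 2 * l * c + l^2"
      unfolding Pb
      by (simp add: cinner_add_left cinner_add_right cinner_scale_left cinner_scale_right bb bQ
          c_def power2_eq_square algebra_simps)
    then have "2 * l * c + l^2 = 0" using nn by simp
    then have "l * (2 * c + l) = 0" by (simp add: algebra_simps power2_eq_square)
    then have "2 * c + l = 0" using ne l_def by simp
    then have "l = 0" using a0 c0 ac by linarith
    then show False using ne l_def by simp
  qed
  have "D = fc D BD (\<lambda>x. x)" by (rule eigb.fc_id[OF E, symmetric])
  also have "\<dots> = fc D BD (\<lambda>x. 0)" by (rule eigb.fc_cong[OF E]) (simp add: z)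
  also have "\<dots> = 0" by (simp add: fc_def vec_eq_iff)
  finally show "P = Q" by (simp add: D_def)
qed

section \<open>Permutation matrices\<close>

definition pm :: "('n \<Rightarrow> 'n) \<Rightarrow> complex^'n::finite^'n" where
  "pm f = (\<chi> i j. if i = f j then 1 else 0)"

lemma perm_rep_pm: "perm_rep \<phi> g = pm (\<phi> g)"
  by (simp add: perm_rep_def pm_def)

lemma mult_pm_entry: "(M ** pm f) $ i $ j = M $ i $ (f j)"
  unfolding matrix_matrix_mult_def pm_def by (simp add: if_distrib if_distribR cong: if_cong)

lemma pm_mult_entry: "inj f \<Longrightarrow> (pm f ** M) $ (f i) $ j = M $ i $ j"
  unfolding matrix_matrix_mult_def pm_def by (simp add: inj_eq if_distrib if_distribR cong: if_cong)

lemma comm_entry: "M ** pm f = pm f ** M \<Longrightarrow> inj f \<Longrightarrow> M $ (f i) $ (f j) = M $ i $ j"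
  by (metis mult_pm_entry pm_mult_entry)

lemma pm_unitary1: "inj f \<Longrightarrow> cadj (pm f) ** pm f = mat 1"
proof -
  assume i: "inj f"
  have "(cadj (pm f) ** pm f) $ a $ b = mat 1 $ a $ b" for a b
    unfolding mult_pm_entry by (simp add: cadj_def pm_def mat_def inj_eq[OF i])
  then show ?thesis by (simp add: vec_eq_iff)
qed

lemma pm_unitary2: "bij f \<Longrightarrow> pm f ** cadj (pm f) = mat 1"
proof -
  assume b: "bij f"
  then have i: "inj f" by (simp add: bij_is_inj)
  have "(pm f ** cadj (pm f)) $ i $ j = mat 1 $ i $ j" for i j
  proof -
    obtain i' where ii: "i = f i'" using b by (metis bij_pointE)
    show ?thesis unfolding ii pm_mult_entry[OF i] by (simp add: cadj_def pm_def mat_def)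
  qed
  then show ?thesis by (simp add: vec_eq_iff)
qed

lemma comm_adj:
  assumes b: "bij f" and c: "M ** pm f = pm f ** M"
  shows "cadj M ** pm f = pm f ** cadj M"
proof -
  define U where "U = pm f"
  have u1: "cadj U ** U = mat 1" using pm_unitary1[OF bij_is_inj[OF b]] U_def by simp
  have u2: "U ** cadj U = mat 1" using pm_unitary2[OF b] U_def by simp
  have c': "M ** U = U ** M" using c U_def by simp
  have "cadj U ** M = cadj U ** M ** (U ** cadj U)" by (simp add: u2)
  also have "\<dots> = cadj U ** (M ** U) ** cadj U" by (simp add: matrix_mul_assoc)
  also have "\<dots> = (cadj U ** U) ** M ** cadj U" by (simp add: c' matrix_mul_assoc)
  also have "\<dots> = M ** cadj U" by (simp add: u1)
  finally have "cadj U ** M = M ** cadj U" .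
  then have "cadj (cadj U ** M) = cadj (M ** cadj U)" by simp
  then show ?thesis unfolding cadj_mult cadj_cadj U_def .
qed

definition cconj :: "complex^'n::finite^'n \<Rightarrow> complex^'n^'n" where
  "cconj M = (\<chi> i j. cnj (M $ i $ j))"

lemma cconj_mult: "cconj (A ** B) = cconj A ** cconj B"
  by (simp add: cconj_def matrix_matrix_mult_def vec_eq_iff)

lemma cconj_pm: "cconj (pm f) = pm f"
  by (simp add: cconj_def pm_def vec_eq_iff)

lemma cconj_mv: "cconj M *v v = (\<chi> i. cnj ((M *v (\<chi> j. cnj (v $ j))) $ i))"
  by (simp add: cconj_def matrix_vector_mult_def vec_eq_iff)

lemma norm_cnjv: "norm (\<chi> j. cnj ((v::complex^'n::finite) $ j)) = norm v"
  by (simp add: norm_vec_def)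

lemma opnorm_cconj: "opnorm M \<le> 1 \<Longrightarrow> opnorm (cconj M) \<le> 1"
proof -
  assume M: "opnorm M \<le> 1"
  show ?thesis
  proof (rule opnorm_bound)
    fix v :: "complex^'a"
    have "norm (cconj M *v v) = norm (M *v (\<chi> j. cnj (v $ j)))"
      unfolding cconj_mv by (rule norm_cnjv)
    also have "\<dots> \<le> opnorm M * norm (\<chi> j. cnj (v $ j))" by (rule opnorm_le)
    also have "\<dots> \<le> 1 * norm v" unfolding norm_cnjv using M by (intro mult_right_mono) simp_all
    finally show "norm (cconj M *v v) \<le> 1 * norm v" .
  qed simp
qed

lemma comm_mult: "A ** U = U ** A \<Longrightarrow> B ** U = U ** B \<Longrightarrow> (A ** B) ** U = U ** (A ** B)"
  by (metis matrix_mul_assoc)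




lemma ta_bij:
  assumes "transitive_action G (UNIV::'x set) \<phi>" "g \<in> carrier G" shows "bij (\<phi> g)"
proof -
  interpret transitive_action G "UNIV::'x set" \<phi> by fact
  show ?thesis using bij_prop0[OF assms(2)] by (simp add: Bij_def)
qed

lemma diag_const:
  fixes M :: "complex^'x::finite^'x"
  assumes ta: "transitive_action G (UNIV::'x set) \<phi>"
    and c: "\<And>g. g \<in> carrier G \<Longrightarrow> M ** pm (\<phi> g) = pm (\<phi> g) ** M"
  shows "M $ x $ x = M $ x0 $ x0"
proof -
  interpret transitive_action G "UNIV::'x set" \<phi> by fact
  obtain g where g: "g \<in> carrier G" "\<phi> g x0 = x" using unique_orbit[of x0 x] by blast
  have "inj (\<phi> g)" using ta_bij[OF ta g(1)] bij_is_inj by blast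
  then show ?thesis using comm_entry[OF c[OF g(1)]] g(2) by metis
qed

lemma trace_const:
  fixes M :: "complex^'x::finite^'x"
  assumes ta: "transitive_action G (UNIV::'x set) \<phi>"
    and c: "\<And>g. g \<in> carrier G \<Longrightarrow> M ** pm (\<phi> g) = pm (\<phi> g) ** M"
  shows "mtrace M = of_nat CARD('x) * M $ x0 $ x0"
proof -
  have "mtrace M = (\<Sum>i\<in>(UNIV::'x set). M $ x0 $ x0)"
  proof -
    have d: "M $ i $ i = M $ x0 $ x0" for i by (rule diag_const[OF ta c])
    show ?thesis unfolding mtrace_def by (rule sum.cong[OF refl]) (rule d)
  qed
  then show ?thesis by simp
qed

lemma zero_mv: "(0::complex^'n^'n) *v v = 0"
  by (simp add: matrix_vector_mult_def vec_eq_iff)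

lemma rownorm: "of_real (\<Sum>k\<in>UNIV. (cmod (M$x$k))^2) = (M ** cadj M) $ x $ x"
  unfolding matrix_matrix_mult_def cadj_def of_real_sum vec_lambda_beta
  by (rule sum.cong[OF refl]) (rule complex_norm_square)

lemma colnorm: "of_real (\<Sum>k\<in>UNIV. (cmod (M$k$y))^2) = (cadj M ** M) $ y $ y"
  unfolding matrix_matrix_mult_def cadj_def of_real_sum vec_lambda_beta
  by (rule sum.cong[OF refl]) (metis complex_norm_square mult.commute)

context eigb
begin

lemma fc_add: "fc A B f + fc A B g = fc A B (\<lambda>x. f x + g x)"
  by (simp add: fc_def vec_eq_iff sum.distrib distrib_right)

lemma fc_zero: "fc A B (\<lambda>x. 0) = 0"
  by (simp add: fc_def vec_eq_iff)

lemma fc_quad_Re: "Re (cinner (fc A B f *v v) v) = (\<Sum>b\<in>B. f (evl A b) * (cmod (cinner v b))^2)"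
  by (simp add: fc_quad)

lemma fc_quad_Im: "Im (cinner (fc A B f *v v) v) = 0"
  by (simp add: fc_quad)

end




lemma gf_x: "0 \<le> x \<Longrightarrow> (if x = 0 then 0 else 1 / sqrt x) * x = sqrt (x::real)"
  by (auto simp: real_div_sqrt)

lemma gf_x_gf: "0 \<le> x \<Longrightarrow> (if x = 0 then 0 else 1 / sqrt x) * x * (if x = 0 then 0 else 1 / sqrt x) = (if x = 0 then 0 else (1::real))"
proof (cases "x = 0")
  case False
  assume "0 \<le> x"
  then have "sqrt x * sqrt x = x" by simp
  moreover have "sqrt x \<noteq> 0" using False by simp
  ultimately show ?thesis using False by (simp add: field_simps)
qed simp

theorem theorem4p4:
  fixes G :: "('g, 'b) monoid_scheme" and \<phi> :: "'g \<Rightarrow> 'x::finite \<Rightarrow> 'x"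
    and T :: "complex^'x^'x" and x0 :: 'x
  assumes "finite (carrier G)"
    and "transitive_action G (UNIV :: 'x set) \<phi>"
    and "T \<in> commutant (perm_rep \<phi> ` carrier G)"
  shows "multiplier_norm T = restricted_multiplier_norm T (commutant (perm_rep \<phi> ` carrier G))
    \<and> complex_of_real (restricted_multiplier_norm T (commutant (perm_rep \<phi> ` carrier G)))
        = mtrace (mabs T) / of_nat CARD('x)
    \<and> mtrace (mabs T) / of_nat CARD('x) = cinner (mabs T *v basis_vec x0) (basis_vec x0)"
proof -
  note ta = assms(2)
  define C where "C = commutant (perm_rep \<phi> ` carrier G)"
  define n where "n = CARD('x)"
  have n0: "n > 0" unfolding n_def by simp
  have bj: "bij (\<phi> g)" if "g \<in> carrier G" for g using ta_bij[OF ta that] .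
  have Tc: "T ** pm (\<phi> g) = pm (\<phi> g) ** T" if "g \<in> carrier G" for g
    using assms(3) that unfolding commutant_def perm_rep_pm by auto
  have Tac: "cadj T ** pm (\<phi> g) = pm (\<phi> g) ** cadj T" if "g \<in> carrier G" for g
    using comm_adj[OF bj[OF that] Tc[OF that]] .
  define AT where "AT = cadj T ** T"
  have hAT: "cadj AT = AT" by (simp add: AT_def cadj_mult)
  obtain B where E: "eigb AT B" using spectral_eigb[OF hAT] by blast
  interpret E: eigb AT B by (rule E)
  have ATc: "pm (\<phi> g) ** AT = AT ** pm (\<phi> g)" if "g \<in> carrier G" for g
    using comm_mult[OF Tac[OF that] Tc[OF that]] unfolding AT_def by simp
  have fcc: "fc AT B f ** pm (\<phi> g) = pm (\<phi> g) ** fc AT B f" if "g \<in> carrier G" for g f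
    using E.fc_commute[OF ATc[OF that]] by simp
  have ev0: "0 \<le> evl AT b" if "b \<in> B" for b
  proof -
    have "cinner (AT *v b) b = cinner (T *v b) (T *v b)"
      unfolding AT_def by (simp add: cinner_adj' matrix_vector_mul_assoc)
    then show ?thesis unfolding evl_def by (simp add: cinner_self)
  qed
  define P where "P = fc AT B sqrt"
  have psdP: "psd P"
    unfolding psd_def P_def
    using E.fc_adj E.fc_quad_Im E.fc_quad_Re ev0 by (auto intro!: sum_nonneg)
  have PP: "P ** P = AT"
  proof -
    have "P ** P = fc AT B (\<lambda>x. sqrt x * sqrt x)" unfolding P_def by (rule E.fc_mult)
    also have "\<dots> = fc AT B (\<lambda>x. x)" by (rule E.fc_cong) (simp add: ev0)
    also have "\<dots> = AT" by (rule E.fc_id)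
    finally show ?thesis .
  qed
  have mabsP: "mabs T = P"
    unfolding mabs_def
  proof (rule the_equality)
    show "psd P \<and> P ** P = cadj T ** T" using psdP PP AT_def by simp
  next
    fix P' assume "psd P' \<and> P' ** P' = cadj T ** T"
    then show "P' = P" using psd_sqrt_unique[of P' P] psdP PP AT_def by simp
  qed
  have Pc: "P ** pm (\<phi> g) = pm (\<phi> g) ** P" if "g \<in> carrier G" for g
    unfolding P_def by (rule fcc[OF that])
  define t where "t = Re (P $ x0 $ x0)"
  have Pdiag: "P $ x0 $ x0 = of_real t"
  proof -
    have "P $ x0 $ x0 = cinner (P *v basis_vec x0) (basis_vec x0)" by (simp add: cinner_basis)
    moreover have "Im (cinner (P *v basis_vec x0) (basis_vec x0)) = 0" using psdP psd_def by blast
    ultimately show ?thesis unfolding t_def by (simp add: complex_eq_iff)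
  qed
  have t0: "0 \<le> t"
  proof -
    have "P $ x0 $ x0 = cinner (P *v basis_vec x0) (basis_vec x0)" by (simp add: cinner_basis)
    then show ?thesis unfolding t_def using psd_pos[OF psdP] by simp
  qed
  have PdiagX: "P $ x $ x = of_real t" for x
    using diag_const[OF ta Pc, of x x0] Pdiag by simp
  have trP: "mtrace P = of_nat n * of_real t"
    using trace_const[OF ta Pc, of x0] Pdiag n_def by simp

  define gf where "gf \<mu> = (if \<mu> = 0 then 0 else 1 / sqrt \<mu>)" for \<mu> :: real
  define Gm where "Gm = fc AT B gf"
  define W where "W = T ** Gm"
  define Q where "Q = fc AT B (\<lambda>x. sqrt (sqrt x))"
  define ind where "ind \<mu> = (if \<mu> = 0 then 0 else (1::real))" for \<mu> :: real
  define ind0 where "ind0 \<mu> = (if \<mu> = 0 then 1 else (0::real))" for \<mu> :: real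
  have hGm: "cadj Gm = Gm" unfolding Gm_def by (rule E.fc_adj)
  have hQ: "cadj Q = Q" unfolding Q_def by (rule E.fc_adj)
  have QQ: "Q ** Q = P"
  proof -
    have "Q ** Q = fc AT B (\<lambda>x. sqrt (sqrt x) * sqrt (sqrt x))" unfolding Q_def by (rule E.fc_mult)
    also have "\<dots> = P" unfolding P_def by (rule E.fc_cong) (simp add: ev0)
    finally show ?thesis .
  qed
  have Gmc: "Gm ** pm (\<phi> g) = pm (\<phi> g) ** Gm" if "g \<in> carrier G" for g
    unfolding Gm_def by (rule fcc[OF that])
  have Wc: "W ** pm (\<phi> g) = pm (\<phi> g) ** W" if "g \<in> carrier G" for g
    unfolding W_def by (rule comm_mult[OF Tc[OF that] Gmc[OF that]])
  have GmAT: "Gm ** AT = P"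
  proof -
    have "Gm ** AT = fc AT B gf ** fc AT B (\<lambda>x. x)" unfolding Gm_def E.fc_id ..
    also have "\<dots> = fc AT B (\<lambda>x. gf x * x)" by (rule E.fc_mult)
    also have "\<dots> = P" unfolding P_def
    proof (rule E.fc_cong)
      fix b assume "b \<in> B"
      then have "0 \<le> evl AT b" by (rule ev0)
      then show "gf (evl AT b) * evl AT b = sqrt (evl AT b)"
        unfolding gf_def by (rule gf_x)
    qed
    finally show ?thesis .
  qed
  have TN: "T ** fc AT B ind0 = 0"
  proof (rule mat_eqI)
    fix v
    define u where "u = fc AT B ind0 *v v"
    have "AT ** fc AT B ind0 = fc AT B (\<lambda>x. x) ** fc AT B ind0" by (simp add: E.fc_id)
    also have "\<dots> = fc AT B (\<lambda>x. x * ind0 x)" by (rule E.fc_mult)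
    also have "\<dots> = fc AT B (\<lambda>x. 0)" by (rule E.fc_cong) (simp add: ind0_def)
    also have "\<dots> = 0" by (rule E.fc_zero)
    finally have z: "AT ** fc AT B ind0 = 0" .
    have "cinner (T *v u) (T *v u) = cinner (AT *v u) u"
      unfolding AT_def by (simp add: cinner_adj' matrix_vector_mul_assoc)
    also have "\<dots> = 0" unfolding u_def by (simp add: matrix_vector_mul_assoc z zero_mv)
    finally have "T *v u = 0" by (simp add: cinner_self_eq_0)
    then show "(T ** fc AT B ind0) *v v = 0 *v v"
      unfolding u_def by (simp add: matrix_vector_mul_assoc zero_mv)
  qed
  have WP: "W ** P = T"
  proof -
    have "Gm ** P = fc AT B (\<lambda>x. gf x * sqrt x)" unfolding Gm_def P_def by (rule E.fc_mult)
    also have "\<dots> = fc AT B ind"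
    proof (rule E.fc_cong)
      fix b assume "b \<in> B"
      then have "0 \<le> evl AT b" by (rule ev0)
      then show "gf (evl AT b) * sqrt (evl AT b) = ind (evl AT b)"
        unfolding gf_def ind_def by auto
    qed
    finally have GP: "Gm ** P = fc AT B ind" .
    have one: "fc AT B ind + fc AT B ind0 = mat 1"
    proof -
      have "fc AT B ind + fc AT B ind0 = fc AT B (\<lambda>x. ind x + ind0 x)" by (rule E.fc_add)
      also have "\<dots> = fc AT B (\<lambda>x. 1)" by (rule E.fc_cong) (simp add: ind_def ind0_def)
      also have "\<dots> = mat 1" by (rule E.fc_one)
      finally show ?thesis .
    qed
    have "T = T ** (fc AT B ind + fc AT B ind0)" unfolding one by simp
    also have "\<dots> = T ** fc AT B ind" by (simp add: matrix_add_ldistrib TN)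
    finally have "T = T ** fc AT B ind" .
    then show ?thesis unfolding W_def by (simp add: GP matrix_mul_assoc[symmetric])
  qed
  have Tfact: "T = (W ** Q) ** Q"
    using WP QQ by (simp add: matrix_mul_assoc[symmetric])

  define K where "K = T ** Gm ** cadj T"
  have Kc: "K ** pm (\<phi> g) = pm (\<phi> g) ** K" if "g \<in> carrier G" for g
    unfolding K_def by (rule comm_mult[OF comm_mult[OF Tc[OF that] Gmc[OF that]] Tac[OF that]])
  have GPG: "Gm ** P ** Gm = Gm"
  proof -
    have "Gm ** P ** Gm = fc AT B (\<lambda>x. gf x * sqrt x * gf x)"
      unfolding Gm_def P_def by (simp add: E.fc_mult)
    also have "\<dots> = Gm" unfolding Gm_def
    proof (rule E.fc_cong)
      fix b assume "b \<in> B"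
      then have "0 \<le> evl AT b" by (rule ev0)
      then show "gf (evl AT b) * sqrt (evl AT b) * gf (evl AT b) = gf (evl AT b)"
        unfolding gf_def by auto
    qed
    finally show ?thesis .
  qed
  have WQK: "(W ** Q) ** cadj (W ** Q) = K"
  proof -
    have "(W ** Q) ** cadj (W ** Q) = W ** (Q ** Q) ** cadj W"
      by (simp add: cadj_mult hQ matrix_mul_assoc)
    also have "\<dots> = T ** (Gm ** P ** Gm) ** cadj T"
      by (simp add: QQ W_def cadj_mult hGm matrix_mul_assoc)
    also have "\<dots> = K" by (simp add: GPG K_def)
    finally show ?thesis .
  qed
  have trK: "mtrace K = mtrace P"
  proof -
    have "mtrace K = trace (T ** (Gm ** cadj T))" by (simp add: K_def mtrace_trace matrix_mul_assoc)
    also have "\<dots> = trace ((Gm ** cadj T) ** T)" by (rule trace_mul_sym)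
    also have "\<dots> = trace P" by (simp add: GmAT[symmetric] AT_def matrix_mul_assoc)
    finally show ?thesis by (simp add: mtrace_trace)
  qed
  have Kdiag: "K $ x $ x = of_real t" for x
  proof -
    have "K $ x $ x = K $ x0 $ x0" by (rule diag_const[OF ta Kc])
    moreover have "of_nat n * K $ x0 $ x0 = of_nat n * of_real t"
      using trace_const[OF ta Kc, of x0] trK trP n_def by simp
    ultimately show ?thesis using n0 by simp
  qed
  have rA: "(\<Sum>k\<in>UNIV. (cmod ((W ** Q)$x$k))^2) \<le> t" for x
  proof -
    have "complex_of_real (\<Sum>k\<in>UNIV. (cmod ((W ** Q)$x$k))^2) = of_real t"
      unfolding rownorm WQK Kdiag ..
    then have "(\<Sum>k\<in>UNIV. (cmod ((W ** Q)$x$k))^2) = t" by (simp only: of_real_eq_iff)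
    then show ?thesis by simp
  qed
  have cB: "(\<Sum>k\<in>UNIV. (cmod (Q$k$y))^2) \<le> t" for y
  proof -
    have "complex_of_real (\<Sum>k\<in>UNIV. (cmod (Q$k$y))^2) = of_real t"
      unfolding colnorm hQ QQ PdiagX ..
    then have "(\<Sum>k\<in>UNIV. (cmod (Q$k$y))^2) = t" by (simp only: of_real_eq_iff)
    then show ?thesis by simp
  qed
  have ub: "opnorm (schur T R) \<le> t * opnorm R" for R
    using schur_bound[OF t0 rA cB, of R] Tfact by simp

  have WW: "cadj W ** W = fc AT B ind"
  proof -
    have "cadj W ** W = Gm ** AT ** Gm" by (simp add: W_def cadj_mult hGm AT_def matrix_mul_assoc)
    also have "\<dots> = fc AT B gf ** fc AT B (\<lambda>x. x) ** fc AT B gf"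
      unfolding Gm_def E.fc_id ..
    also have "\<dots> = fc AT B (\<lambda>x. gf x * x * gf x)"
      by (simp add: E.fc_mult)
    also have "\<dots> = fc AT B ind"
    proof (rule E.fc_cong)
      fix b assume "b \<in> B"
      then have "0 \<le> evl AT b" by (rule ev0)
      then show "gf (evl AT b) * evl AT b * gf (evl AT b) = ind (evl AT b)"
        unfolding gf_def ind_def by (rule gf_x_gf)
    qed
    finally show ?thesis .
  qed
  have normW: "norm (W *v v) \<le> norm v" for v
  proof -
    have "(norm (W *v v))^2 = Re (cinner (W *v v) (W *v v))" by (simp add: cinner_self)
    also have "\<dots> = Re (cinner (fc AT B ind *v v) v)"
      by (simp add: cinner_adj' matrix_vector_mul_assoc WW)
    also have "\<dots> = (\<Sum>b\<in>B. ind (evl AT b) * (cmod (cinner v b))^2)" by (rule E.fc_quad_Re)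
    also have "\<dots> \<le> (\<Sum>b\<in>B. 1 * (cmod (cinner v b))^2)"
      by (rule sum_mono) (simp add: ind_def)
    also have "\<dots> = Re (cinner (fc AT B (\<lambda>x. 1) *v v) v)" by (rule E.fc_quad_Re[symmetric])
    also have "\<dots> = (norm v)^2" by (simp add: E.fc_one cinner_self)
    finally show ?thesis by (rule power2_le_imp_le) simp
  qed
  have opW: "opnorm W \<le> 1" by (rule opnorm_bound) (simp_all add: normW)
  define R0 where "R0 = cconj W"
  have R0C: "R0 \<in> C"
    unfolding C_def commutant_def R0_def
  proof (clarify)
    fix g assume g: "g \<in> carrier G"
    have "cconj W ** pm (\<phi> g) = cconj (W ** pm (\<phi> g))" by (simp add: cconj_mult cconj_pm)
    also have "\<dots> = cconj (pm (\<phi> g) ** W)" by (simp add: Wc[OF g])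
    also have "\<dots> = pm (\<phi> g) ** cconj W" by (simp add: cconj_mult cconj_pm)
    finally show "cconj W ** perm_rep \<phi> g = perm_rep \<phi> g ** cconj W" by (simp add: perm_rep_pm)
  qed
  have opR0: "opnorm R0 \<le> 1" unfolding R0_def by (rule opnorm_cconj[OF opW])
  have lb: "t \<le> opnorm (schur T R0)"
  proof -
    define S where "S = schur T R0"
    define u :: "complex^'x" where "u = (\<chi> i. 1)"
    have nu: "(norm u)^2 = real n" by (simp add: norm_vec_sq u_def n_def)
    have "cinner (S *v u) u = (\<Sum>x\<in>UNIV. \<Sum>y\<in>UNIV. T$x$y * cnj (W$x$y))"
      by (simp add: S_def u_def R0_def schur_def cconj_def cinner_def matrix_vector_mult_def)
    also have "\<dots> = (\<Sum>y\<in>UNIV. \<Sum>x\<in>UNIV. cnj (W$x$y) * T$x$y)"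
      by (subst sum.swap) (simp add: mult.commute)
    also have "\<dots> = mtrace (cadj W ** T)"
      by (simp add: mtrace_def matrix_matrix_mult_def cadj_def)
    also have "cadj W ** T = P" by (simp add: W_def cadj_mult hGm GmAT[symmetric] AT_def matrix_mul_assoc)
    finally have cu: "cinner (S *v u) u = of_nat n * of_real t" using trP by simp
    have "real n * t = cmod (cinner (S *v u) u)" using cu t0 by (simp add: norm_mult)
    also have "\<dots> \<le> norm (S *v u) * norm u" by (rule norm_cinner)
    also have "\<dots> \<le> (opnorm S * norm u) * norm u" by (rule mult_right_mono[OF opnorm_le]) simp
    also have "\<dots> = opnorm S * real n" using nu by (simp add: power2_eq_square mult_ac)
    finally have "real n * t \<le> real n * opnorm S" by (simp add: mult_ac)
    then show ?thesis unfolding S_def using n0 by simp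
  qed

  define F where "F R = opnorm (schur T R)" for R
  have Fb: "F R \<le> t" if "opnorm R \<le> 1" for R
  proof -
    have "F R \<le> t * opnorm R" unfolding F_def by (rule ub)
    also have "\<dots> \<le> t * 1" using that t0 by (intro mult_left_mono) simp_all
    finally show ?thesis by simp
  qed
  have bdd: "bdd_above (F ` {R. opnorm R \<le> 1})" by (rule bdd_aboveI2[where M=t]) (simp add: Fb)
  have bddC: "bdd_above (F ` {R\<in>C. opnorm R \<le> 1})" by (rule bdd_aboveI2[where M=t]) (simp add: Fb)
  have mn: "multiplier_norm T = (SUP R\<in>{R. opnorm R \<le> 1}. F R)" unfolding multiplier_norm_def F_def ..
  have rn: "restricted_multiplier_norm T C = (SUP R\<in>{R\<in>C. opnorm R \<le> 1}. F R)"
    unfolding restricted_multiplier_norm_def F_def ..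
  have mn_le: "multiplier_norm T \<le> t"
    unfolding mn using opR0 by (intro cSUP_least) (auto simp: Fb)
  have rn_ge: "t \<le> restricted_multiplier_norm T C"
    unfolding rn using R0C opR0 lb F_def by (intro cSUP_upper2[OF bddC, of R0]) auto
  have rn_le: "restricted_multiplier_norm T C \<le> multiplier_norm T"
    unfolding rn mn using R0C opR0 by (intro cSUP_subset_mono[OF _ bdd]) auto
  have eqs: "multiplier_norm T = t" "restricted_multiplier_norm T C = t"
    using mn_le rn_ge rn_le by linarith+
  have tr: "mtrace (mabs T) / of_nat CARD('x) = of_real t"
    using trP n0 unfolding mabsP n_def by simp
  have ci: "cinner (mabs T *v basis_vec x0) (basis_vec x0) = of_real t"
    unfolding mabsP cinner_basis Pdiag ..
  show ?thesis using eqs tr ci unfolding C_def by simp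
qed


end
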